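(* Let $f \colon \mathbb{R}^n \to \mathbb{R}$ and $g \colon \mathbb{R}^n \to \mathbb{R}^m$ be continuously differentiable, let $X \subseteq \mathbb{R}^m$ be nonempty and closed, let $\rho>0$, and let $p^\rho(y) = \sum_{i=1}^n p_i^\rho(y_i)$ where each $p_i^\rho\colon\mathbb{R}\to\mathbb{R}$ satisfies (P.1)–(P.3) below with unique minimizer $s_i^\rho>0$. Let $x^*$ be a local minimizer of $$\text{(SPO)}\qquad \min_x\ f(x) + \rho\|x\|_0 \quad \text{s.t. } g(x)\in X,$$ and define $y^*\in\mathbb{R}^n$ by $y_i^* = s_i^\rho$ if $x_i^*=0$ and $y_i^*=0$ otherwise (so that $(x^*,y^* )$ is a local minimizer of (SPOref) below). Let $I_0(x^* ) = \{i : x_i^*=0\}$ and let $P \in \mathbb{R}^{|I_0(x^* )|\times n}$ be the matrix whose rows are $e_i^T$, $i\in I_0(x^* )$. Then the following are equivalent: (a) there exists $\alpha^*>0$ such that for every $\alpha\ge\alpha^*$, $x^*$ is a local minimizer of $f(x) + \alpha\|Px\|_1$ over the set $\{x : g(x)\in X\}$ (i.e. $f + \alpha\|P\cdot\|_1$ is an exact penalty function at $x^*$ for the tightened problem $\min f(x)$ s.t. $g(x)\in X$, $x_i = 0$ for all $i \in I_0(x^* )$); (b) there exists $\alpha^*>0$ such that for every $\alpha\ge\alpha^*$, $(x^*,y^* )$ is a local minimizer of $$\text{(Pen}(\alpha))\qquad \min_{x,y}\ f(x) + p^\rho(y) + \alpha |x|^T y \quad\text{s.t. } g(x)\in X,\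 y\ge 0$$ (i.e. Pen$(\alpha)$ is an exact penalty function at $(x^*,y^* )$ for the problem (SPOref): $\min_{x,y} f(x)+p^\rho(y)$ s.t. $g(x)\in X$, $x\circ y = 0$, $y\ge 0$).
   Context: $\|x\|_0$ is the number of nonzero components of $x$; $|x| = (|x_1|,\dots,|x_n|)^T$; $\circ$ is the componentwise product; $e_i$ is the $i$-th unit vector. Conditions on each $p_i^\rho$: (P.1) $p_i^\rho$ is convex and attains a unique minimum at some point $s_i^\rho>0$; (P.2) $p_i^\rho(0) - p_i^\rho(s_i^\rho) = \rho$; (P.3) $p_i^\rho$ is continuously differentiable. *)

theory Defs
  imports "HOL-Analysis.Analysis"
begin

definition C1_map :: "('a::euclidean_space \<Rightarrow> 'b::euclidean_space) \<Rightarrow> bool" where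
  "C1_map F \<longleftrightarrow> (\<exists>F'. (\<forall>x. (F has_derivative blinfun_apply (F' x)) (at x)) \<and> continuous_on UNIV F')"

definition local_minimizer :: "('a::metric_space \<Rightarrow> real) \<Rightarrow> 'a set \<Rightarrow> 'a \<Rightarrow> bool" where
  "local_minimizer F S x \<longleftrightarrow> x \<in> S \<and> (\<exists>e>0. \<forall>z\<in>S. dist z x < e \<longrightarrow> F x \<le> F z)"

definition l0norm :: "real^'n \<Rightarrow> nat" where
  "l0norm x = card {i. x $ i \<noteq> 0}"

definition I0 :: "real^'n \<Rightarrow> 'n set" where
  "I0 x = {i. x $ i = 0}"

text \<open>||P x||_1 where P has rows e_i^T for i in I_0(x0).\<close>
definition P_l1 :: "real^'n \<Rightarrow> real^'n \<Rightarrow> real" where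
  "P_l1 x0 x = (\<Sum>i\<in>I0 x0. \<bar>x $ i\<bar>)"

text \<open>Conditions (P.1)-(P.3) on a scalar function q with minimizer s and parameter rho.\<close>
definition penalty_conds :: "real \<Rightarrow> (real \<Rightarrow> real) \<Rightarrow> real \<Rightarrow> bool" where
  "penalty_conds \<rho> q s \<longleftrightarrow>
     convex_on UNIV q \<and> s > 0 \<and> (\<forall>t. q s \<le> q t) \<and> (\<forall>t. q t = q s \<longrightarrow> t = s) \<and>
     q 0 - q s = \<rho> \<and>
     (\<exists>q'. (\<forall>t. (q has_real_derivative q' t) (at t)) \<and> continuous_on UNIV q')"

end

theory Submission
  imports Defs
begin

lemma pc_tangent:
  assumes "penalty_conds \<rho> q s"
  shows "\<exists>D. \<forall>t. q t \<ge> q 0 + D * t"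
proof -
  from assms obtain q' where d: "\<And>t. (q has_real_derivative q' t) (at t)" and cv: "convex_on UNIV q"
    unfolding penalty_conds_def by blast
  have "\<forall>t. q t - q 0 \<ge> q' 0 * (t - 0)"
    using convex_on_imp_above_tangent[OF cv, of 0] d by auto
  then show ?thesis by (intro exI[of _ "q' 0"]) (smt (verit))
qed

lemma a_to_b:
  fixes f :: "real^'n \<Rightarrow> real" and S :: "(real^'n) set"
    and p :: "'n \<Rightarrow> real \<Rightarrow> real" and s :: "'n \<Rightarrow> real"
  assumes p_conds: "\<And>i. penalty_conds \<rho> (p i) (s i)"
    and a0: "a0 > 0" and lm: "local_minimizer (\<lambda>x. f x + a0 * P_l1 xs x) S xs"
  shows "\<exists>\<alpha>0>0. \<forall>\<alpha>\<ge>\<alpha>0.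
            local_minimizer
              (\<lambda>(x, y). f x + (\<Sum>i\<in>UNIV. p i (y $ i)) + \<alpha> * (\<Sum>i\<in>UNIV. \<bar>x $ i\<bar> * y $ i))
              {(x, y). x \<in> S \<and> (\<forall>i. y $ i \<ge> 0)}
              (xs, \<chi> i. if xs $ i = 0 then s i else 0)"
proof -
  define ys :: "real^'n" where "ys = (\<chi> i. if xs $ i = 0 then s i else 0)"
  from lm obtain e where e: "e > 0" and xsS: "xs \<in> S"
    and emin: "\<And>z. z \<in> S \<Longrightarrow> dist z xs < e \<Longrightarrow> f xs + a0 * P_l1 xs xs \<le> f z + a0 * P_l1 xs z"
    unfolding local_minimizer_def by blast
  have P0: "P_l1 xs xs = 0" unfolding P_l1_def I0_def by simp
  have spos: "\<And>i. s i > 0" using p_conds unfolding penalty_conds_def by blast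
  have smin: "\<And>i t. p i (s i) \<le> p i t" using p_conds unfolding penalty_conds_def by blast
  obtain D where D: "\<And>i t. p i t \<ge> p i 0 + D i * t"
    using pc_tangent[OF p_conds] by metis
  define d where "d i = (if xs $ i = 0 then s i / 2 else \<bar>xs $ i\<bar> / 2)" for i
  have dpos: "\<And>i. d i > 0" using spos unfolding d_def by auto
  define \<delta> where "\<delta> = min e (Min (range d))"
  have \<delta>pos: "\<delta> > 0" unfolding \<delta>_def using e dpos by auto
  have \<delta>d: "\<And>i. \<delta> \<le> d i" unfolding \<delta>_def by (simp add: min.coboundedI2)
  have nn: "0 \<le> a0 / d j + \<bar>D j\<bar> / d j" for j
  proof -
    have "0 \<le> a0 / d j" using dpos[of j] a0 by simp
    moreover have "0 \<le> \<bar>D j\<bar> / d j" using dpos[of j] by simp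
    ultimately show ?thesis by linarith
  qed
  define A where "A = (\<Sum>i\<in>UNIV. a0 / d i + \<bar>D i\<bar> / d i) + 1"
  have Ai: "\<And>i. a0 / d i + \<bar>D i\<bar> / d i \<le> A - 1"
  proof -
    fix i
    have "a0 / d i + \<bar>D i\<bar> / d i \<le> (\<Sum>i\<in>UNIV. a0 / d i + \<bar>D i\<bar> / d i)"
      by (rule member_le_sum) (use nn in auto)
    then show "a0 / d i + \<bar>D i\<bar> / d i \<le> A - 1" unfolding A_def by simp
  qed
  have Apos: "A > 0"
  proof -
    have "0 \<le> a0 / d undefined + \<bar>D undefined\<bar> / d undefined" using nn by auto
    then show ?thesis using Ai[of undefined] by linarith
  qed
  have A1: "\<And>i. a0 \<le> A * d i" and A2: "\<And>i. \<bar>D i\<bar> \<le> A * d i"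
  proof -
    fix i
    have h1: "a0 / d i \<le> A" and h2: "\<bar>D i\<bar> / d i \<le> A"
    proof -
      have "0 \<le> a0 / d i" using dpos[of i] a0 by simp
      moreover have "0 \<le> \<bar>D i\<bar> / d i" using dpos[of i] by simp
      ultimately show "a0 / d i \<le> A" "\<bar>D i\<bar> / d i \<le> A" using Ai[of i] by linarith+
    qed
    show "a0 \<le> A * d i" using h1 dpos[of i] by (simp add: divide_le_eq)
    show "\<bar>D i\<bar> \<le> A * d i" using h2 dpos[of i] by (simp add: divide_le_eq)
  qed
  show ?thesis
  proof (intro exI[of _ A] conjI allI impI Apos)
    fix \<alpha> :: real assume \<alpha>A: "\<alpha> \<ge> A"
    show "local_minimizer
              (\<lambda>(x, y). f x + (\<Sum>i\<in>UNIV. p i (y $ i)) + \<alpha> * (\<Sum>i\<in>UNIV. \<bar>x $ i\<bar> * y $ i))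
              {(x, y). x \<in> S \<and> (\<forall>i. y $ i \<ge> 0)}
              (xs, \<chi> i. if xs $ i = 0 then s i else 0)"
      unfolding local_minimizer_def ys_def[symmetric]
    proof (intro conjI exI[of _ \<delta>] \<delta>pos ballI impI)
      show "(xs, ys) \<in> {(x, y). x \<in> S \<and> (\<forall>i. y $ i \<ge> 0)}"
        using xsS spos unfolding ys_def by (auto simp: less_imp_le)
      fix z assume zS: "z \<in> {(x, y). x \<in> S \<and> (\<forall>i. y $ i \<ge> 0)}" and zd: "dist z (xs, ys) < \<delta>"
      obtain x y where z: "z = (x, y)" by fastforce
      have xS: "x \<in> S" and y0: "\<And>i. y $ i \<ge> 0" using zS z by auto
      have dx: "dist x xs < \<delta>" using dist_fst_le[of z "(xs,ys)"] zd z by simp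
      have dy: "dist y ys < \<delta>" using dist_snd_le[of z "(xs,ys)"] zd z by simp
      have cx: "\<And>i. \<bar>x $ i - xs $ i\<bar> < \<delta>"
      proof -
        fix i
        have "\<bar>(x - xs) $ i\<bar> \<le> norm (x - xs)" by (rule component_le_norm_cart)
        then show "\<bar>x $ i - xs $ i\<bar> < \<delta>" using dx by (simp add: dist_norm)
      qed
      have cy: "\<And>i. \<bar>y $ i - ys $ i\<bar> < \<delta>"
      proof -
        fix i
        have "\<bar>(y - ys) $ i\<bar> \<le> norm (y - ys)" by (rule component_le_norm_cart)
        then show "\<bar>y $ i - ys $ i\<bar> < \<delta>" using dy by (simp add: dist_norm)
      qed
      have trm: "p i (y $ i) + \<alpha> * (\<bar>x $ i\<bar> * y $ i)
          \<ge> p i (ys $ i) + (if xs $ i = 0 then a0 * \<bar>x $ i\<bar> else 0)" for i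
      proof (cases "xs $ i = 0")
        case True
        then have ysi: "ys $ i = s i" unfolding ys_def by simp
        have "y $ i \<ge> d i" using cy[of i] \<delta>d[of i] True ysi unfolding d_def by auto
        then have "A * d i \<le> \<alpha> * y $ i" using \<alpha>A dpos[of i] Apos
          by (intro mult_mono) auto
        then have "\<alpha> * y $ i \<ge> a0" using A1[of i] by linarith
        then have "\<alpha> * (\<bar>x $ i\<bar> * y $ i) \<ge> a0 * \<bar>x $ i\<bar>"
          by (metis abs_ge_zero mult.assoc mult.commute mult_right_mono)
        then show ?thesis using smin[of i "y $ i"] True ysi by simp
      next
        case False
        then have ysi: "ys $ i = 0" unfolding ys_def by simp
        have "\<bar>x $ i\<bar> \<ge> d i" using cx[of i] \<delta>d[of i] False unfolding d_def by auto
        then have "A * d i \<le> \<alpha> * \<bar>x $ i\<bar>" using \<alpha>A dpos[of i] Apos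
          by (intro mult_mono) auto
        then have "\<alpha> * \<bar>x $ i\<bar> \<ge> \<bar>D i\<bar>" using A2[of i] by linarith
        then have "\<alpha> * \<bar>x $ i\<bar> * y $ i \<ge> \<bar>D i\<bar> * y $ i" using y0[of i]
          by (simp add: mult_right_mono)
        moreover have "D i * y $ i \<ge> - \<bar>D i\<bar> * y $ i" using y0[of i]
          by (intro mult_right_mono) auto
        ultimately show ?thesis using D[of i "y $ i"] False ysi by (simp add: mult.assoc)
      qed
      have "(\<Sum>i\<in>UNIV. p i (ys $ i)) + a0 * P_l1 xs x
          = (\<Sum>i\<in>UNIV. p i (ys $ i) + (if xs $ i = 0 then a0 * \<bar>x $ i\<bar> else 0))"
        unfolding P_l1_def I0_def sum.distrib sum_distrib_left
        by (simp add: sum.If_cases)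
      also have "\<dots> \<le> (\<Sum>i\<in>UNIV. p i (y $ i) + \<alpha> * (\<bar>x $ i\<bar> * y $ i))"
        by (rule sum_mono) (use trm in auto)
      also have "\<dots> = (\<Sum>i\<in>UNIV. p i (y $ i)) + \<alpha> * (\<Sum>i\<in>UNIV. \<bar>x $ i\<bar> * y $ i)"
        by (simp add: sum.distrib sum_distrib_left)
      finally have T: "(\<Sum>i\<in>UNIV. p i (ys $ i)) + a0 * P_l1 xs x \<le>
          (\<Sum>i\<in>UNIV. p i (y $ i)) + \<alpha> * (\<Sum>i\<in>UNIV. \<bar>x $ i\<bar> * y $ i)" .
      have "f xs \<le> f x + a0 * P_l1 xs x" using emin[OF xS] dx \<delta>_def P0 by auto
      then show "(case (xs, ys) of (x, y) \<Rightarrow> f x + (\<Sum>i\<in>UNIV. p i (y $ i)) + \<alpha> * (\<Sum>i\<in>UNIV. \<bar>x $ i\<bar> * y $ i))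
          \<le> (case z of (x, y) \<Rightarrow> f x + (\<Sum>i\<in>UNIV. p i (y $ i)) + \<alpha> * (\<Sum>i\<in>UNIV. \<bar>x $ i\<bar> * y $ i))"
      proof -
        have "(\<Sum>i\<in>UNIV. \<bar>xs $ i\<bar> * ys $ i) = 0"
          by (rule sum.neutral) (simp add: ys_def)
        then show ?thesis using T z \<open>f xs \<le> f x + a0 * P_l1 xs x\<close> by simp
      qed
    qed
  qed
qed

lemma b_to_a:
  fixes f :: "real^'n \<Rightarrow> real" and S :: "(real^'n) set"
    and p :: "'n \<Rightarrow> real \<Rightarrow> real" and s :: "'n \<Rightarrow> real"
  assumes spos: "\<And>i. s i > 0"
    and a0: "a0 > 0" and lm: "local_minimizer
              (\<lambda>(x, y). f x + (\<Sum>i\<in>UNIV. p i (y $ i)) + a0 * (\<Sum>i\<in>UNIV. \<bar>x $ i\<bar> * y $ i))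
              {(x, y). x \<in> S \<and> (\<forall>i. y $ i \<ge> 0)}
              (xs, \<chi> i. if xs $ i = 0 then s i else 0)"
  shows "\<exists>\<alpha>0>0. \<forall>\<alpha>\<ge>\<alpha>0. local_minimizer (\<lambda>x. f x + \<alpha> * P_l1 xs x) S xs"
proof -
  define ys :: "real^'n" where "ys = (\<chi> i. if xs $ i = 0 then s i else 0)"
  have ys0: "\<And>i. ys $ i \<ge> 0" unfolding ys_def using spos by (simp add: less_imp_le)
  from lm obtain e where e: "e > 0" and xsS: "xs \<in> S"
    and emin: "\<And>z. z \<in> {(x, y). x \<in> S \<and> (\<forall>i. y $ i \<ge> 0)} \<Longrightarrow> dist z (xs, ys) < e \<Longrightarrow>
       f xs + (\<Sum>i\<in>UNIV. p i (ys $ i)) + a0 * (\<Sum>i\<in>UNIV. \<bar>xs $ i\<bar> * ys $ i)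
       \<le> (case z of (x, y) \<Rightarrow> f x + (\<Sum>i\<in>UNIV. p i (y $ i)) + a0 * (\<Sum>i\<in>UNIV. \<bar>x $ i\<bar> * y $ i))"
    unfolding local_minimizer_def ys_def[symmetric] by auto
  have P0: "P_l1 xs xs = 0" unfolding P_l1_def I0_def by simp
  have Z: "(\<Sum>i\<in>UNIV. \<bar>xs $ i\<bar> * ys $ i) = 0"
    by (rule sum.neutral) (simp add: ys_def)
  define M where "M = 1 + (\<Sum>i\<in>UNIV. s i)"
  have sM: "s i \<le> M" for i
  proof -
    have "s i \<le> (\<Sum>i\<in>UNIV. s i)" by (rule member_le_sum) (use spos in \<open>auto simp: less_imp_le\<close>)
    then show ?thesis unfolding M_def by simp
  qed
  have Mpos: "M > 0" using sM[of undefined] spos[of undefined] by linarith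
  show ?thesis
  proof (intro exI[of _ "a0 * M"] conjI allI impI)
    show "a0 * M > 0" using a0 Mpos by simp
    fix \<alpha> :: real assume \<alpha>A: "\<alpha> \<ge> a0 * M"
    show "local_minimizer (\<lambda>x. f x + \<alpha> * P_l1 xs x) S xs"
      unfolding local_minimizer_def
    proof (intro conjI exI[of _ e] e ballI impI xsS)
      fix x assume xS: "x \<in> S" and dx: "dist x xs < e"
      have "dist (x, ys) (xs, ys) < e" using dx by (simp add: dist_Pair_Pair)
      from emin[OF _ this] xS ys0
      have "f xs + (\<Sum>i\<in>UNIV. p i (ys $ i)) + a0 * (\<Sum>i\<in>UNIV. \<bar>xs $ i\<bar> * ys $ i)
         \<le> f x + (\<Sum>i\<in>UNIV. p i (ys $ i)) + a0 * (\<Sum>i\<in>UNIV. \<bar>x $ i\<bar> * ys $ i)" by auto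
      then have 1: "f xs \<le> f x + a0 * (\<Sum>i\<in>UNIV. \<bar>x $ i\<bar> * ys $ i)" using Z by simp
      have "(\<Sum>i\<in>UNIV. \<bar>x $ i\<bar> * ys $ i) = (\<Sum>i\<in>UNIV. if xs $ i = 0 then \<bar>x $ i\<bar> * s i else 0)"
        by (rule sum.cong) (auto simp: ys_def)
      also have "\<dots> \<le> (\<Sum>i\<in>UNIV. if xs $ i = 0 then \<bar>x $ i\<bar> * M else 0)"
        by (rule sum_mono) (auto intro: mult_left_mono sM)
      also have "\<dots> = M * P_l1 xs x"
        unfolding P_l1_def I0_def sum_distrib_left
        by (simp add: sum.If_cases mult.commute)
      finally have 2: "(\<Sum>i\<in>UNIV. \<bar>x $ i\<bar> * ys $ i) \<le> M * P_l1 xs x" .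
      have Pn: "P_l1 xs x \<ge> 0" unfolding P_l1_def by (simp add: sum_nonneg)
      have "a0 * (\<Sum>i\<in>UNIV. \<bar>x $ i\<bar> * ys $ i) \<le> a0 * (M * P_l1 xs x)"
        using 2 a0 by (simp add: mult_left_mono)
      also have "\<dots> \<le> \<alpha> * P_l1 xs x" using \<alpha>A Pn
        by (metis mult.assoc mult_right_mono)
      finally show "f xs + \<alpha> * P_l1 xs xs \<le> f x + \<alpha> * P_l1 xs x" using 1 P0 by simp
    qed
  qed
qed

theorem mainTheorem2:
  fixes f :: "real^'n \<Rightarrow> real" and g :: "real^'n \<Rightarrow> real^'m"
    and X :: "(real^'m) set" and \<rho> :: real
    and p :: "'n \<Rightarrow> real \<Rightarrow> real" and s :: "'n \<Rightarrow> real"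
    and xs :: "real^'n"
  assumes f_C1: "C1_map f" and g_C1: "C1_map g"
    and X_ne: "X \<noteq> {}" and X_closed: "closed X"
    and rho_pos: "\<rho> > 0"
    and p_conds: "\<And>i. penalty_conds \<rho> (p i) (s i)"
    and xs_loc: "local_minimizer (\<lambda>x. f x + \<rho> * real (l0norm x)) {x. g x \<in> X} xs"
  shows "(\<exists>\<alpha>0>0. \<forall>\<alpha>\<ge>\<alpha>0.
            local_minimizer (\<lambda>x. f x + \<alpha> * P_l1 xs x) {x. g x \<in> X} xs)
     \<longleftrightarrow>
         (\<exists>\<alpha>0>0. \<forall>\<alpha>\<ge>\<alpha>0.
            local_minimizer
              (\<lambda>(x, y). f x + (\<Sum>i\<in>UNIV. p i (y $ i)) + \<alpha> * (\<Sum>i\<in>UNIV. \<bar>x $ i\<bar> * y $ i))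
              {(x, y). g x \<in> X \<and> (\<forall>i. y $ i \<ge> 0)}
              (xs, \<chi> i. if xs $ i = 0 then s i else 0))"
proof
  have spos: "\<And>i. s i > 0" using p_conds unfolding penalty_conds_def by blast
  have setq: "{(x, y). x \<in> {x. g x \<in> X} \<and> (\<forall>i. y $ i \<ge> 0)} = {(x, y). g x \<in> X \<and> (\<forall>i. (0::real) \<le> y $ i)}"
    by simp
  {
    assume "\<exists>\<alpha>0>0. \<forall>\<alpha>\<ge>\<alpha>0. local_minimizer (\<lambda>x. f x + \<alpha> * P_l1 xs x) {x. g x \<in> X} xs"
    then obtain a0 where a0: "a0 > 0" and lm: "local_minimizer (\<lambda>x. f x + a0 * P_l1 xs x) {x. g x \<in> X} xs"
      by auto
    from a_to_b[OF p_conds a0 lm] show "\<exists>\<alpha>0>0. \<forall>\<alpha>\<ge>\<alpha>0.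
            local_minimizer
              (\<lambda>(x, y). f x + (\<Sum>i\<in>UNIV. p i (y $ i)) + \<alpha> * (\<Sum>i\<in>UNIV. \<bar>x $ i\<bar> * y $ i))
              {(x, y). g x \<in> X \<and> (\<forall>i. y $ i \<ge> 0)}
              (xs, \<chi> i. if xs $ i = 0 then s i else 0)" by simp
  }
  {
    assume "\<exists>\<alpha>0>0. \<forall>\<alpha>\<ge>\<alpha>0.
            local_minimizer
              (\<lambda>(x, y). f x + (\<Sum>i\<in>UNIV. p i (y $ i)) + \<alpha> * (\<Sum>i\<in>UNIV. \<bar>x $ i\<bar> * y $ i))
              {(x, y). g x \<in> X \<and> (\<forall>i. y $ i \<ge> 0)}
              (xs, \<chi> i. if xs $ i = 0 then s i else 0)"
    then obtain a0 where a0: "a0 > 0" and lm: "local_minimizer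
              (\<lambda>(x, y). f x + (\<Sum>i\<in>UNIV. p i (y $ i)) + a0 * (\<Sum>i\<in>UNIV. \<bar>x $ i\<bar> * y $ i))
              {(x, y). x \<in> {x. g x \<in> X} \<and> (\<forall>i. y $ i \<ge> 0)}
              (xs, \<chi> i. if xs $ i = 0 then s i else 0)"
      by auto
    from b_to_a[OF spos a0 lm] show "\<exists>\<alpha>0>0. \<forall>\<alpha>\<ge>\<alpha>0. local_minimizer (\<lambda>x. f x + \<alpha> * P_l1 xs x) {x. g x \<in> X} xs" .
  }
qed

end
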